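(* Let $1<p<\infty$, $s\in(0,1)$, $sp<N$, $\mu>0$, and let $E\subset\mathbb{R}^N$ be a (possibly unbounded) domain. Let $u\in D^{s,p}_0(E)$ be a sign-changing weak solution of $(-\Delta)^s_pu=\mu|u|^{p^*_s-2}u$ in $E$, $u=0$ in $\mathbb{R}^N\setminus E$ (i.e. both $\max\{u,0\}$ and $\max\{-u,0\}$ are not a.e. zero). Then $$\|u\|^{p^*_s}_{L^{p^*_s}(E)}\ge2\Big(\frac{\mathcal{S}_{p,s}}{\mu}\Big)^{\frac{N}{sp}},\quad [u]^p_{D^{s,p}(\mathbb{R}^N)}\ge2\mu\Big(\frac{\mathcal{S}_{p,s}}{\mu}\Big)^{\frac{N}{sp}},\quad I_\infty(u)\ge2\mu\frac sN\Big(\frac{\mathcal{S}_{p,s}}{\mu}\Big)^{\frac{N}{sp}}.$$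
   Context: $p^*_s=Np/(N-sp)$; $J_p(t)=|t|^{p-2}t$; $[u]_{D^{s,p}(\mathbb{R}^N)}=\big(\int_{\mathbb{R}^{2N}}\frac{|u(x)-u(y)|^p}{|x-y|^{N+sp}}dxdy\big)^{1/p}$; $D^{s,p}_0(\mathbb{R}^N)=\{u\in L^{p^*_s}:[u]<\infty\}$; $D^{s,p}_0(E)=\{u\in D^{s,p}_0(\mathbb{R}^N):u=0\text{ a.e. outside }E\}$. Weak solution: $\int_{\mathbb{R}^{2N}}\frac{J_p(u(x)-u(y))(\varphi(x)-\varphi(y))}{|x-y|^{N+sp}}=\mu\int|u|^{p^*_s-2}u\varphi$ for all $\varphi\in D^{s,p}_0(E)$. $\mathcal{S}_{p,s}=\inf\{[u]^p_{D^{s,p}(\mathbb{R}^N)}:u\in D^{s,p}_0(\mathbb{R}^N),\ \|u\|_{L^{p^*_s}(\mathbb{R}^N)}=1\}$ (sharp Sobolev constant). $I_\infty(u)=\frac1p[u]^p_{D^{s,p}(\mathbb{R}^N)}-\frac{\mu}{p^*_s}\int_{\mathbb{R}^N}|u|^{p^*_s}dx$. *)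

theory Defs
  imports "HOL-Analysis.Analysis"
begin

text \<open>The ambient space R^N is an arbitrary Euclidean space 'a with N = DIM('a).\<close>

definition crit_exp :: "nat \<Rightarrow> real \<Rightarrow> real \<Rightarrow> real" where
  "crit_exp N p s = real N * p / (real N - s * p)"

definition Jp :: "real \<Rightarrow> real \<Rightarrow> real" where
  "Jp p t = \<bar>t\<bar> powr (p - 2) * t"

definition gagliardo_p :: "real \<Rightarrow> real \<Rightarrow> ('a::euclidean_space \<Rightarrow> real) \<Rightarrow> ennreal" where
  "gagliardo_p p s u =
     (\<integral>\<^sup>+ z. ennreal (\<bar>u (fst z) - u (snd z)\<bar> powr p /
                 norm (fst z - snd z) powr (real DIM('a) + s * p)) \<partial>(lborel \<Otimes>\<^sub>M lborel))"

definition Dsp0 :: "real \<Rightarrow> real \<Rightarrow> ('a::euclidean_space \<Rightarrow> real) set" where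
  "Dsp0 p s = {u. u \<in> borel_measurable lborel
      \<and> (\<integral>\<^sup>+ x. ennreal (\<bar>u x\<bar> powr crit_exp DIM('a) p s) \<partial>lborel) < \<infinity>
      \<and> gagliardo_p p s u < \<infinity>}"

definition Dsp0_on :: "real \<Rightarrow> real \<Rightarrow> 'a::euclidean_space set \<Rightarrow> ('a \<Rightarrow> real) set" where
  "Dsp0_on p s E = {u \<in> Dsp0 p s. AE x in lborel. x \<notin> E \<longrightarrow> u x = 0}"

definition weak_solution :: "real \<Rightarrow> real \<Rightarrow> real \<Rightarrow> 'a::euclidean_space set \<Rightarrow> ('a \<Rightarrow> real) \<Rightarrow> bool" where
  "weak_solution p s \<mu> E u \<longleftrightarrow> u \<in> Dsp0_on p s E \<and>
     (\<forall>\<phi> \<in> Dsp0_on p s E.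
        (\<integral> z. Jp p (u (fst z) - u (snd z)) * (\<phi> (fst z) - \<phi> (snd z)) /
               norm (fst z - snd z) powr (real DIM('a) + s * p) \<partial>(lborel \<Otimes>\<^sub>M lborel))
        = \<mu> * (\<integral> x. \<bar>u x\<bar> powr (crit_exp DIM('a) p s - 2) * u x * \<phi> x \<partial>lborel))"

definition sobolev_const :: "'a::euclidean_space itself \<Rightarrow> real \<Rightarrow> real \<Rightarrow> real" where
  "sobolev_const _ p s = Inf {enn2real (gagliardo_p p s u) | u :: 'a \<Rightarrow> real.
      u \<in> Dsp0 p s \<and> (\<integral> x. \<bar>u x\<bar> powr crit_exp DIM('a) p s \<partial>lborel) powr (1 / crit_exp DIM('a) p s) = 1}"

definition I_infty :: "real \<Rightarrow> real \<Rightarrow> real \<Rightarrow> ('a::euclidean_space \<Rightarrow> real) \<Rightarrow> real" where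
  "I_infty p s \<mu> u = enn2real (gagliardo_p p s u) / p
     - \<mu> / crit_exp DIM('a) p s * (\<integral> x. \<bar>u x\<bar> powr crit_exp DIM('a) p s \<partial>lborel)"

end

theory Submission
  imports Defs
begin

lemma Jp_abs: assumes "p > 1" shows "\<bar>Jp p t\<bar> = \<bar>t\<bar> powr (p - 1)"
proof (cases "t = 0")
  case True then show ?thesis using assms by (simp add: Jp_def)
next
  case False
  have "\<bar>Jp p t\<bar> = \<bar>t\<bar> powr (p-2) * \<bar>t\<bar> powr 1" by (simp add: Jp_def abs_mult)
  also have "\<dots> = \<bar>t\<bar> powr (p-2+1)" using False by (simp only: powr_add)
  also have "\<dots> = \<bar>t\<bar> powr (p-1)" by simp
  finally show ?thesis .
qed

lemma pw_gen: assumes "p > 1" "t * d \<ge> 0" "\<bar>d\<bar> \<le> \<bar>t\<bar>"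
  shows "\<bar>d\<bar> powr p \<le> Jp p t * d" "\<bar>Jp p t * d\<bar> \<le> \<bar>t\<bar> powr p"
proof -
  have e: "Jp p t * d = \<bar>t\<bar> powr (p-1) * \<bar>d\<bar>"
  proof -
    have "Jp p t * d = \<bar>t\<bar> powr (p-2) * (t * d)" by (simp add: Jp_def)
    also have "t * d = \<bar>t\<bar> * \<bar>d\<bar>" using assms(2) by (simp add: abs_mult[symmetric])
    finally have "Jp p t * d = \<bar>t\<bar> powr (p-2) * \<bar>t\<bar> * \<bar>d\<bar>" by simp
    moreover have "\<bar>t\<bar> powr (p-2) * \<bar>t\<bar> = \<bar>t\<bar> powr (p-1)"
    proof (cases "t = 0")
      case True then show ?thesis using assms by simp
    next
      case False then show ?thesis using powr_add[of "\<bar>t\<bar>" "p-2" 1] by simp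
    qed
    ultimately show ?thesis by simp
  qed
  have dp: "\<bar>d\<bar> powr p = \<bar>d\<bar> powr (p-1) * \<bar>d\<bar>"
    using powr_add[of "\<bar>d\<bar>" "p-1" 1] assms(1) by (cases "d = 0") auto
  have tp: "\<bar>t\<bar> powr p = \<bar>t\<bar> powr (p-1) * \<bar>t\<bar>"
    using powr_add[of "\<bar>t\<bar>" "p-1" 1] assms(1) by (cases "t = 0") auto
  have m: "\<bar>d\<bar> powr (p-1) \<le> \<bar>t\<bar> powr (p-1)" using assms by (intro powr_mono2) auto
  show "\<bar>d\<bar> powr p \<le> Jp p t * d" unfolding e dp by (intro mult_right_mono m) auto
  show "\<bar>Jp p t * d\<bar> \<le> \<bar>t\<bar> powr p" unfolding e tp abs_mult
    using assms(3) by (simp add: mult_left_mono)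
qed

lemma pw_max: assumes "p > 1"
  shows "\<bar>max a 0 - max b 0\<bar> powr p \<le> Jp p (a - b) * (max a 0 - max b (0::real))"
        "\<bar>Jp p (a - b) * (max a 0 - max b 0)\<bar> \<le> \<bar>a - b\<bar> powr p"
proof -
  have "(a - b) * (max a 0 - max b 0) \<ge> 0" "\<bar>max a 0 - max b 0\<bar> \<le> \<bar>a - b\<bar>"
    by (auto simp: max_def mult_nonneg_nonneg mult_nonpos_nonpos mult_nonpos_nonneg mult_nonneg_nonpos)
  from pw_gen[OF assms this] show
    "\<bar>max a 0 - max b 0\<bar> powr p \<le> Jp p (a - b) * (max a 0 - max b (0::real))"
    "\<bar>Jp p (a - b) * (max a 0 - max b 0)\<bar> \<le> \<bar>a - b\<bar> powr p" by auto
qed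


abbreviation "KK p s (z::'a::euclidean_space \<times> 'a) \<equiv> norm (fst z - snd z) powr (real DIM('a) + s * p)"

lemma gag_meas: assumes "w \<in> borel_measurable (lborel :: 'a::euclidean_space measure)"
  shows "(\<lambda>z::'a\<times>'a. \<bar>w (fst z) - w (snd z)\<bar> powr p / KK p s z) \<in> borel_measurable (lborel \<Otimes>\<^sub>M lborel)"
  using assms by measurable

lemma gag_int: assumes "w \<in> borel_measurable (lborel :: 'a::euclidean_space measure)" "gagliardo_p p s w < \<infinity>"
  shows "integrable (lborel \<Otimes>\<^sub>M lborel) (\<lambda>z::'a\<times>'a. \<bar>w (fst z) - w (snd z)\<bar> powr p / KK p s z)"
    "gagliardo_p p s w = ennreal (\<integral>z. \<bar>w (fst z) - w (snd z)\<bar> powr p / KK p s z \<partial>(lborel \<Otimes>\<^sub>M lborel))"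
proof -
  show i: "integrable (lborel \<Otimes>\<^sub>M lborel) (\<lambda>z::'a\<times>'a. \<bar>w (fst z) - w (snd z)\<bar> powr p / KK p s z)"
    using assms(2) unfolding gagliardo_p_def
    by (intro integrableI_nonneg gag_meas[OF assms(1)]) auto
  show "gagliardo_p p s w = ennreal (\<integral>z. \<bar>w (fst z) - w (snd z)\<bar> powr p / KK p s z \<partial>(lborel \<Otimes>\<^sub>M lborel))"
    unfolding gagliardo_p_def by (intro nn_integral_eq_integral i) auto
qed


lemma crit_facts: assumes "1 < p" "0 < s" "s * p < real DIM('a::euclidean_space)"
  shows "p < crit_exp DIM('a) p s" "1 - p / crit_exp DIM('a) p s = s * p / real DIM('a)"
proof -
  let ?N = "real DIM('a)"
  have d: "?N - s*p > 0" using assms by simp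
  have "p * (?N - s*p) < ?N * p" using assms by (simp add: algebra_simps)
  then show "p < crit_exp DIM('a) p s" unfolding crit_exp_def using d by (simp add: field_simps)
  show "1 - p / crit_exp DIM('a) p s = s * p / ?N" unfolding crit_exp_def using d assms
    by (simp add: field_simps)
qed

lemma pos_part:
  fixes u :: "'a::euclidean_space \<Rightarrow> real" and p s \<mu> :: real
  defines "q \<equiv> crit_exp DIM('a) p s"
  assumes p1: "1 < p" and s0: "0 < s" and sp: "s * p < real DIM('a)" and mu: "0 < \<mu>"
    and uD: "u \<in> Dsp0 p s"
    and eq: "(\<integral> z. Jp p (u (fst z) - u (snd z)) * (max (u (fst z)) 0 - max (u (snd z)) 0) /
               norm (fst z - snd z) powr (real DIM('a) + s * p) \<partial>(lborel \<Otimes>\<^sub>M lborel))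
        = \<mu> * (\<integral> x. \<bar>u x\<bar> powr (q - 2) * u x * max (u x) 0 \<partial>lborel)"
    and nz: "\<not> (AE x in lborel. max (u x) 0 = 0)"
  shows "(sobolev_const TYPE('a) p s / \<mu>) powr (real DIM('a) / (s * p))
           \<le> (\<integral> x. max (u x) 0 powr q \<partial>lborel)"
proof -
  let ?N = "real DIM('a)"
  let ?M = "lborel \<Otimes>\<^sub>M lborel :: ('a \<times> 'a) measure"
  define up where "up = (\<lambda>x. max (u x) (0::real))"
  have qp: "p < q" and qe: "1 - p / q = s * p / ?N" using crit_facts[OF p1 s0 sp] q_def by auto
  have q0: "q > 0" using qp p1 by simp
  have um[measurable]: "u \<in> borel_measurable lborel" and uq: "(\<integral>\<^sup>+ x. ennreal (\<bar>u x\<bar> powr q) \<partial>lborel) < \<infinity>"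
    and ug: "gagliardo_p p s u < \<infinity>" using uD unfolding Dsp0_def q_def by auto
  have upm[measurable]: "up \<in> borel_measurable lborel" unfolding up_def by measurable
  have uqi: "integrable lborel (\<lambda>x. \<bar>u x\<bar> powr q)"
    using uq by (intro integrableI_nonneg) auto
  have upqi: "integrable lborel (\<lambda>x. up x powr q)"
    by (rule Bochner_Integration.integrable_bound[OF uqi]) (auto simp: up_def max_def intro!: powr_mono2)
  have upg: "gagliardo_p p s up < \<infinity>"
  proof -
    have "gagliardo_p p s up \<le> gagliardo_p p s u" unfolding gagliardo_p_def
      by (intro nn_integral_mono ennreal_leI divide_right_mono powr_mono2) (use p1 in \<open>auto simp: up_def max_def\<close>)
    then show ?thesis using ug by auto
  qed
  note hi = gag_int[OF upm upg]
  define h where "h = (\<lambda>z::'a\<times>'a. \<bar>up (fst z) - up (snd z)\<bar> powr p / KK p s z)"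
  define g where "g = (\<lambda>z::'a\<times>'a. Jp p (u (fst z) - u (snd z)) * (up (fst z) - up (snd z)) / KK p s z)"
  note ui = gag_int[OF um ug]
  have gi: "integrable ?M g"
  proof (rule Bochner_Integration.integrable_bound[OF ui(1)])
    show "g \<in> borel_measurable ?M" unfolding g_def Jp_def by measurable
    show "AE x in ?M. norm (g x) \<le> norm (\<bar>u (fst x) - u (snd x)\<bar> powr p / KK p s x)"
      unfolding g_def up_def using pw_max(2)[OF p1]
      by (auto simp: abs_mult intro!: divide_right_mono)
  qed
  have hg: "integral\<^sup>L ?M h \<le> integral\<^sup>L ?M g"
    using hi(1) gi unfolding h_def g_def up_def
    by (intro integral_mono) (auto intro!: divide_right_mono pw_max(1)[OF p1])
  define A where "A = (\<integral> x. up x powr q \<partial>lborel)"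
  have rhs: "(\<integral> x. \<bar>u x\<bar> powr (q - 2) * u x * max (u x) 0 \<partial>lborel) = A"
    unfolding A_def up_def
  proof (intro Bochner_Integration.integral_cong refl)
    fix x
    show "\<bar>u x\<bar> powr (q - 2) * u x * max (u x) 0 = max (u x) 0 powr q"
    proof (cases "u x > 0")
      case True
      have "u x powr (q - 2 + 1 + 1) = u x powr (q-2) * u x powr 1 * u x powr 1"
        by (simp only: powr_add)
      then have "u x powr (q-2) * u x * u x = u x powr (q - 2 + 1 + 1)"
        using True by simp
      moreover have "q - 2 + 1 + 1 = q" by simp
      ultimately show ?thesis using True by (simp add: max_def)
    next
      case False then show ?thesis using q0 by (simp add: max_def)
    qed
  qed
  have gle: "integral\<^sup>L ?M h \<le> \<mu> * A" using hg eq rhs unfolding g_def up_def by simp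
  have A0: "A > 0"
  proof -
    have "A \<ge> 0" unfolding A_def by simp
    moreover have "A \<noteq> 0"
    proof
      assume "A = 0"
      then have "AE x in lborel. up x powr q = 0"
        using integral_nonneg_eq_0_iff_AE[OF upqi] unfolding A_def by auto
      then have "AE x in lborel. max (u x) 0 = 0" by eventually_elim (auto simp: up_def)
      then show False using nz by simp
    qed
    ultimately show ?thesis by simp
  qed
  define c where "c = A powr (1/q)"
  have c0: "c > 0" unfolding c_def using A0 by simp
  have cq: "c powr q = A" unfolding c_def using A0 q0 by (simp add: powr_powr)
  define v where "v = (\<lambda>x. up x / c)"
  have vm[measurable]: "v \<in> borel_measurable lborel" unfolding v_def by measurable
  have vq: "\<And>x. \<bar>v x\<bar> powr q = up x powr q / c powr q"
    unfolding v_def using c0 by (simp add: up_def powr_divide)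
  have vqi: "integrable lborel (\<lambda>x. \<bar>v x\<bar> powr q)" unfolding vq using upqi by simp
  have vqn: "(\<integral>\<^sup>+ x. ennreal (\<bar>v x\<bar> powr q) \<partial>lborel) < \<infinity>"
    using nn_integral_eq_integral[OF vqi] by simp
  have vq1: "(\<integral> x. \<bar>v x\<bar> powr q \<partial>lborel) = 1"
    unfolding vq using cq A0 by (simp add: A_def)
  have vh: "\<And>z. \<bar>v (fst z) - v (snd z)\<bar> powr p / KK p s z = h z / c powr p"
    unfolding v_def h_def using c0
    by (simp add: diff_divide_distrib[symmetric] powr_divide)
  have vhi: "integrable ?M (\<lambda>z. \<bar>v (fst z) - v (snd z)\<bar> powr p / KK p s z)"
    unfolding vh using hi(1) unfolding h_def[symmetric] by (rule integrable_divide)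
  have vg: "gagliardo_p p s v = ennreal (integral\<^sup>L ?M h / c powr p)"
    unfolding gagliardo_p_def
    by (subst nn_integral_eq_integral[OF vhi], simp add: h_def, simp only: vh integral_divide_zero)
  have vD: "v \<in> Dsp0 p s" unfolding Dsp0_def q_def[symmetric] using vqn vg by auto
  have hnn: "integral\<^sup>L ?M h \<ge> 0" unfolding h_def by simp
  define X where "X = {enn2real (gagliardo_p p s w) | w :: 'a \<Rightarrow> real.
      w \<in> Dsp0 p s \<and> (\<integral> x. \<bar>w x\<bar> powr crit_exp DIM('a) p s \<partial>lborel) powr (1 / crit_exp DIM('a) p s) = 1}"
  have SX: "sobolev_const TYPE('a) p s = Inf X" unfolding sobolev_const_def X_def by simp
  have vX: "integral\<^sup>L ?M h / c powr p \<in> X" unfolding X_def q_def[symmetric]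
    using vD vq1 vg hnn c0 by (intro CollectI exI[of _ v]) auto
  have bX: "bdd_below X" unfolding X_def by (intro bdd_belowI[of _ 0]) auto
  have S_le: "sobolev_const TYPE('a) p s \<le> integral\<^sup>L ?M h / c powr p"
    unfolding SX using cInf_lower[OF vX bX] .
  have S0: "sobolev_const TYPE('a) p s \<ge> 0" unfolding SX
    using vX by (intro cInf_greatest) (auto simp: X_def)
  have cp: "c powr p = A powr (p / q)" unfolding c_def using A0 by (simp add: powr_powr)
  have "sobolev_const TYPE('a) p s \<le> \<mu> * A / A powr (p/q)"
    using S_le gle c0 cp by (metis divide_right_mono order_trans powr_ge_zero)
  also have "\<mu> * A / A powr (p/q) = \<mu> * A powr (s * p / ?N)"
    using A0 qe[symmetric] by (simp add: powr_diff[symmetric] powr_diff)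
  finally have "sobolev_const TYPE('a) p s / \<mu> \<le> A powr (s * p / ?N)" using mu by (simp add: field_simps)
  then have "(sobolev_const TYPE('a) p s / \<mu>) powr (?N / (s * p)) \<le> (A powr (s * p / ?N)) powr (?N / (s * p))"
    using S0 mu s0 p1 by (intro powr_mono2) auto
  also have "\<dots> = A" using A0 s0 p1 sp by (simp add: powr_powr)
  finally show ?thesis unfolding A_def up_def .
qed


lemma Dsp0_pos: assumes "1 < p" "w \<in> Dsp0 p s" shows "(\<lambda>x. max (w x) 0) \<in> Dsp0 p s"
proof -
  have wm[measurable]: "w \<in> borel_measurable lborel" using assms unfolding Dsp0_def by auto
  have q: "(\<integral>\<^sup>+ x. ennreal (\<bar>max (w x) 0\<bar> powr crit_exp DIM('a) p s) \<partial>lborel)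
      \<le> (\<integral>\<^sup>+ x. ennreal (\<bar>w x\<bar> powr crit_exp DIM('a) p s) \<partial>lborel)"
    by (intro nn_integral_mono ennreal_leI) (auto simp: max_def)
  have g: "gagliardo_p p s (\<lambda>x. max (w x) 0) \<le> gagliardo_p p s w" unfolding gagliardo_p_def
    by (intro nn_integral_mono ennreal_leI divide_right_mono powr_mono2) (use assms in \<open>auto simp: max_def\<close>)
  show ?thesis using assms q g unfolding Dsp0_def by (auto simp: order.strict_trans1)
qed


lemma Dsp0_neg: assumes "w \<in> Dsp0 p s" shows "(\<lambda>x. - w x) \<in> Dsp0 p s"
proof -
  have "gagliardo_p p s (\<lambda>x. - w x) = gagliardo_p p s w" unfolding gagliardo_p_def
    by (simp add: abs_minus_commute)
  then show ?thesis using assms unfolding Dsp0_def by auto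
qed

lemma Jp_neg: "Jp p (- t) = - Jp p t" by (simp add: Jp_def)

lemma Jp_self: assumes "1 < p" shows "Jp p t * t = \<bar>t\<bar> powr p"
proof -
  have "t * t \<ge> 0" by simp
  from pw_gen[OF assms this order.refl] have "\<bar>t\<bar> powr p \<le> Jp p t * t" "\<bar>Jp p t * t\<bar> \<le> \<bar>t\<bar> powr p" by auto
  moreover have "Jp p t * t \<le> \<bar>Jp p t * t\<bar>" by (rule abs_ge_self)
  ultimately show ?thesis by linarith
qed

theorem lemma2p10:
  fixes u :: "'a::euclidean_space \<Rightarrow> real" and E :: "'a set" and p s \<mu> :: real
  assumes "1 < p" and "0 < s" and "s < 1" and "s * p < real DIM('a)" and "0 < \<mu>"
    and "open E" and "connected E" and "E \<noteq> {}"
    and "u \<in> Dsp0_on p s E"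
    and "weak_solution p s \<mu> E u"
    and "\<not> (AE x in lborel. max (u x) 0 = 0)"
    and "\<not> (AE x in lborel. max (- u x) 0 = 0)"
  shows "(\<integral>x\<in>E. \<bar>u x\<bar> powr crit_exp DIM('a) p s \<partial>lborel)
           \<ge> 2 * (sobolev_const TYPE('a) p s / \<mu>) powr (real DIM('a) / (s * p))
    \<and> enn2real (gagliardo_p p s u)
           \<ge> 2 * \<mu> * (sobolev_const TYPE('a) p s / \<mu>) powr (real DIM('a) / (s * p))
    \<and> I_infty p s \<mu> u
           \<ge> 2 * \<mu> * (s / real DIM('a)) * (sobolev_const TYPE('a) p s / \<mu>) powr (real DIM('a) / (s * p))"
proof -
  let ?N = "real DIM('a)"
  let ?M = "lborel \<Otimes>\<^sub>M lborel :: ('a \<times> 'a) measure"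
  define q where "q = crit_exp DIM('a) p s"
  define X where "X = (sobolev_const TYPE('a) p s / \<mu>) powr (?N / (s * p))"
  have p1: "1 < p" and s0: "0 < s" and sp: "s * p < ?N" and mu: "0 < \<mu>" using assms by auto
  have qp: "p < q" and qe: "1 - p / q = s * p / ?N" using crit_facts[OF p1 s0 sp] q_def by auto
  have q0: "q > 0" using qp p1 by simp
  have uD: "u \<in> Dsp0 p s" and uE: "AE x in lborel. x \<notin> E \<longrightarrow> u x = 0"
    using assms(9) unfolding Dsp0_on_def by auto
  have um[measurable]: "u \<in> borel_measurable lborel" and uq: "(\<integral>\<^sup>+ x. ennreal (\<bar>u x\<bar> powr q) \<partial>lborel) < \<infinity>"
    and ug: "gagliardo_p p s u < \<infinity>" using uD unfolding Dsp0_def q_def by auto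
  have ws: "\<And>\<phi>. \<phi> \<in> Dsp0_on p s E \<Longrightarrow>
        (\<integral> z. Jp p (u (fst z) - u (snd z)) * (\<phi> (fst z) - \<phi> (snd z)) /
               norm (fst z - snd z) powr (?N + s * p) \<partial>?M)
        = \<mu> * (\<integral> x. \<bar>u x\<bar> powr (q - 2) * u x * \<phi> x \<partial>lborel)"
    using assms(10) unfolding weak_solution_def q_def by blast
  have nuD: "(\<lambda>x. - u x) \<in> Dsp0 p s" by (rule Dsp0_neg[OF uD])
  have phi1: "(\<lambda>x. max (u x) 0) \<in> Dsp0_on p s E"
    using Dsp0_pos[OF p1 uD] uE unfolding Dsp0_on_def by (auto elim!: eventually_mono)
  have phi2: "(\<lambda>x. max (- u x) 0) \<in> Dsp0_on p s E"
    using Dsp0_pos[OF p1 nuD] uE unfolding Dsp0_on_def by (auto elim!: eventually_mono)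
  have A: "X \<le> (\<integral> x. max (u x) 0 powr q \<partial>lborel)"
    unfolding X_def q_def
    by (rule pos_part[OF p1 s0 sp mu uD ws[OF phi1, unfolded q_def] assms(11)])
  have eq2: "(\<integral> z. Jp p (- u (fst z) - - u (snd z)) * (max (- u (fst z)) 0 - max (- u (snd z)) 0) /
               norm (fst z - snd z) powr (?N + s * p) \<partial>?M)
        = \<mu> * (\<integral> x. \<bar>- u x\<bar> powr (q - 2) * - u x * max (- u x) 0 \<partial>lborel)"
  proof -
    have "(\<integral> z. Jp p (- u (fst z) - - u (snd z)) * (max (- u (fst z)) 0 - max (- u (snd z)) 0) /
               norm (fst z - snd z) powr (?N + s * p) \<partial>?M)
        = (\<integral> z. - (Jp p (u (fst z) - u (snd z)) * (max (- u (fst z)) 0 - max (- u (snd z)) 0) /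
               norm (fst z - snd z) powr (?N + s * p)) \<partial>?M)"
    proof (intro Bochner_Integration.integral_cong refl)
      fix z :: "'a \<times> 'a"
      have "- u (fst z) - - u (snd z) = - (u (fst z) - u (snd z))" by simp
      then have "Jp p (- u (fst z) - - u (snd z)) = - Jp p (u (fst z) - u (snd z))"
        by (simp only: Jp_neg)
      then show "Jp p (- u (fst z) - - u (snd z)) * (max (- u (fst z)) 0 - max (- u (snd z)) 0) /
               norm (fst z - snd z) powr (?N + s * p) = - (Jp p (u (fst z) - u (snd z)) * (max (- u (fst z)) 0 - max (- u (snd z)) 0) /
               norm (fst z - snd z) powr (?N + s * p))" by simp
    qed
    also have "\<dots> = - \<mu> * (\<integral> x. \<bar>u x\<bar> powr (q - 2) * u x * max (- u x) 0 \<partial>lborel)"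
      using ws[OF phi2] by (simp only: Bochner_Integration.integral_minus)
    also have "\<dots> = \<mu> * (\<integral> x. \<bar>- u x\<bar> powr (q - 2) * - u x * max (- u x) 0 \<partial>lborel)"
      by simp
    finally show ?thesis .
  qed
  have B: "X \<le> (\<integral> x. max (- u x) 0 powr q \<partial>lborel)"
    unfolding X_def q_def
    by (rule pos_part[OF p1 s0 sp mu nuD eq2[unfolded q_def] assms(12)])
  have uqi: "integrable lborel (\<lambda>x. \<bar>u x\<bar> powr q)"
    using uq by (intro integrableI_nonneg) auto
  have i1: "integrable lborel (\<lambda>x. max (u x) 0 powr q)"
    by (rule Bochner_Integration.integrable_bound[OF uqi]) (auto simp: max_def)
  have i2: "integrable lborel (\<lambda>x. max (- u x) 0 powr q)"
    by (rule Bochner_Integration.integrable_bound[OF uqi]) (auto simp: max_def)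
  define T where "T = (\<integral> x. \<bar>u x\<bar> powr q \<partial>lborel)"
  have TAB: "T = (\<integral> x. max (u x) 0 powr q \<partial>lborel) + (\<integral> x. max (- u x) 0 powr q \<partial>lborel)"
    unfolding T_def Bochner_Integration.integral_add[OF i1 i2, symmetric]
    using q0 by (intro Bochner_Integration.integral_cong) (auto simp: max_def)
  have T2: "2 * X \<le> T" using A B TAB by simp
  have Em[measurable]: "E \<in> sets lborel" using assms(6) by simp
  have TE: "(\<integral>x\<in>E. \<bar>u x\<bar> powr q \<partial>lborel) = T"
    unfolding set_lebesgue_integral_def T_def
  proof (intro integral_cong_AE)
    show "AE x in lborel. indicator E x *\<^sub>R \<bar>u x\<bar> powr q = \<bar>u x\<bar> powr q"
      using uE by eventually_elim (use q0 in \<open>auto simp: indicator_def\<close>)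
  qed measurable
  note ui = gag_int[OF um ug]
  have G: "enn2real (gagliardo_p p s u) = \<mu> * T"
  proof -
    have "enn2real (gagliardo_p p s u) = (\<integral>z. \<bar>u (fst z) - u (snd z)\<bar> powr p / KK p s z \<partial>?M)"
      unfolding ui(2) by (rule enn2real_ennreal, rule Bochner_Integration.integral_nonneg) simp
    also have "\<dots> = (\<integral> z. Jp p (u (fst z) - u (snd z)) * (u (fst z) - u (snd z)) /
               norm (fst z - snd z) powr (?N + s * p) \<partial>?M)"
      by (intro Bochner_Integration.integral_cong refl) (simp only: Jp_self[OF p1])
    also have "\<dots> = \<mu> * (\<integral> x. \<bar>u x\<bar> powr (q - 2) * u x * u x \<partial>lborel)"
      by (rule ws[OF assms(9)])
    also have "(\<integral> x. \<bar>u x\<bar> powr (q - 2) * u x * u x \<partial>lborel) = T"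
      unfolding T_def
    proof (intro Bochner_Integration.integral_cong refl)
      fix x
      show "\<bar>u x\<bar> powr (q - 2) * u x * u x = \<bar>u x\<bar> powr q"
      proof (cases "u x = 0")
        case True then show ?thesis using q0 by simp
      next
        case False
        have "\<bar>u x\<bar> powr (q - 2 + 1 + 1) = \<bar>u x\<bar> powr (q-2) * \<bar>u x\<bar> powr 1 * \<bar>u x\<bar> powr 1"
          by (simp only: powr_add)
        moreover have "q - 2 + 1 + 1 = q" by simp
        moreover have "u x * u x = \<bar>u x\<bar> * \<bar>u x\<bar>" by simp
        ultimately show ?thesis by (metis mult.assoc powr_one_gt_zero_iff powr_one abs_ge_zero)
      qed
    qed
    finally show ?thesis .
  qed
  have I: "I_infty p s \<mu> u = \<mu> * (s / ?N) * T"
  proof -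
    have "1/p - 1/q = (1 - p/q)/p" using p1 q0 by (simp add: field_simps)
    also have "\<dots> = (s * p / ?N) / p" by (simp only: qe)
    also have "\<dots> = s / ?N" using p1 by simp
    finally have "1/p - 1/q = s / ?N" .
    have "I_infty p s \<mu> u = \<mu> * T / p - \<mu> / q * T" unfolding I_infty_def G q_def T_def by simp
    also have "\<dots> = \<mu> * T * (1/p - 1/q)" by (simp add: algebra_simps)
    finally show ?thesis using \<open>1/p - 1/q = s / ?N\<close> by simp
  qed
  have sN: "s / ?N \<ge> 0" using s0 by simp
  have c2: "2 * \<mu> * X \<le> \<mu> * T" using mult_left_mono[OF T2, of \<mu>] mu by (simp add: algebra_simps)
  have c3: "2 * \<mu> * (s / ?N) * X \<le> \<mu> * (s / ?N) * T"
    using mult_left_mono[OF c2 sN] by (simp add: algebra_simps)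
  show ?thesis unfolding X_def[symmetric] q_def[symmetric] TE G I
    using T2 c2 c3 by blast
qed

end
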